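(* Let $\mathcal{T}=(T_n)_{n\in\mathbb{N}}$ be a scale with sequence of factors $(\kappa_n)_{n\in\mathbb{N}}$. Then there is a rational $\mathcal{T}$-sparsely long tail $R_\infty\subset\mathbb{N}$ with $0<d(R_\infty)<1$.
   Context: A scale is a sequence of positive integers $\mathcal{T}=(T_n)_{n\in\mathbb{N}}$ together with a sequence of integers (factors) $(\kappa_n)_{n\in\mathbb{N}}$ such that $\kappa_0=3$, $\kappa_n$ is a multiple of $3\kappa_{n-1}$ for $n\ge1$, $T_0$ is a multiple of $3$, $T_n=\kappa_nT_{n-1}$ for $n\ge1$, and $\kappa_{n+1}/\kappa_n\to\infty$. An $\mathbb{N}$-interval is $[a,b]_{\mathbb{N}}=[a,b]\cap\mathbb{N}$. A component of $\mathbb{M}\subset\mathbb{N}$ is a maximal $\mathbb{N}$-interval contained in $\mathbb{M}$. For $T\ge1$, a $T$-regular interval is $[kT,(k+1)T-1]_{\mathbb{N}}$ for some $k\ge0$. $R_\infty\subset\mathbb{N}$ is $\mathcal{T}$-adapted if each component of $R_\infty$ is a $T_n$-regular interval for some $n$; its $n$-skeleton $R_n$ is the union of the components of $R_\infty$ that are $T_k$-regular for some $k\ge n$. $R_\infty$ is a $\mathcal{T}$-sparsely long tail if: (1) it is $\mathcal{T}$-adapted; (2) $0\notin R_\infty$; (3) for every $n\ge1$ and every $T_n$-regular interval $I=[a,b]_{\mathbb{N}}$ not contained in $R_\infty$ (equivalently not contained in $R_n$), one has $I\cap R_{n-1}\subset[a+T_n/3,\,b-T_n/3]_{\mathbb{N}}$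 and $0<\#(R_{n-1}\cap I)/T_n\le1/\kappa_n$. For $A\subset\mathbb{Z}$, $\bar d(A)=\limsup_{N}\frac1N\#(A\cap[0,N-1])$, $d(A)$ the density when $\limsup=\liminf$. An arithmetic progression is $a\mathbb{Z}+b$ ($a,b\in\mathbb{N}$, $a\ne0$); $A\subset\mathbb{Z}$ is rational if for every $\varepsilon>0$ there is a finite union $B$ of arithmetic progressions with $\bar d(A\triangle B)<\varepsilon$; $A\subset\mathbb{N}$ is rational if $A=C\cap\mathbb{N}$ for a rational $C\subset\mathbb{Z}$. A rational $\mathcal{T}$-sparsely long tail is a set that is both. *)

theory Defs
  imports Complex_Main "HOL-Library.Extended_Real"
begin

definition scale :: "(nat \<Rightarrow> nat) \<Rightarrow> (nat \<Rightarrow> nat) \<Rightarrow> bool" where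
  "scale T \<kappa> \<longleftrightarrow>
     (\<forall>n. T n > 0) \<and> \<kappa> 0 = 3 \<and> (\<forall>n\<ge>1. (3 * \<kappa> (n - 1)) dvd \<kappa> n) \<and>
     3 dvd T 0 \<and> (\<forall>n\<ge>1. T n = \<kappa> n * T (n - 1)) \<and>
     filterlim (\<lambda>n. real (\<kappa> (Suc n)) / real (\<kappa> n)) at_top sequentially"

definition reg_interval :: "nat \<Rightarrow> nat \<Rightarrow> nat set" where
  "reg_interval T k = {k * T .. (k + 1) * T - 1}"

definition regular :: "nat \<Rightarrow> nat set \<Rightarrow> bool" where
  "regular T I \<longleftrightarrow> (\<exists>k. I = reg_interval T k)"

definition component :: "nat set \<Rightarrow> nat set \<Rightarrow> bool" where
  "component M I \<longleftrightarrow> (\<exists>a b. a \<le> b \<and> I = {a..b} \<and> I \<subseteq> M \<and>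
      (a = 0 \<or> a - 1 \<notin> M) \<and> b + 1 \<notin> M)"

definition adapted :: "(nat \<Rightarrow> nat) \<Rightarrow> nat set \<Rightarrow> bool" where
  "adapted T R \<longleftrightarrow> (\<forall>x\<in>R. \<exists>I. x \<in> I \<and> component R I) \<and>
      (\<forall>I. component R I \<longrightarrow> (\<exists>n. regular (T n) I))"

definition skeleton :: "(nat \<Rightarrow> nat) \<Rightarrow> nat set \<Rightarrow> nat \<Rightarrow> nat set" where
  "skeleton T R n = \<Union>{I. component R I \<and> (\<exists>k\<ge>n. regular (T k) I)}"

definition sparsely_long_tail :: "(nat \<Rightarrow> nat) \<Rightarrow> (nat \<Rightarrow> nat) \<Rightarrow> nat set \<Rightarrow> bool" where
  "sparsely_long_tail T \<kappa> R \<longleftrightarrow> adapted T R \<and> 0 \<notin> R \<and>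
     (\<forall>n\<ge>1. \<forall>k. let I = reg_interval (T n) k; a = k * T n; b = (k + 1) * T n - 1 in
        \<not> I \<subseteq> R \<longrightarrow>
          I \<inter> skeleton T R (n - 1) \<subseteq> {a + T n div 3 .. b - T n div 3} \<and>
          0 < real (card (skeleton T R (n - 1) \<inter> I)) / real (T n) \<and>
          real (card (skeleton T R (n - 1) \<inter> I)) / real (T n) \<le> 1 / real (\<kappa> n))"

definition upper_density :: "int set \<Rightarrow> ereal" where
  "upper_density A = limsup (\<lambda>N. ereal (real (card (A \<inter> {0..<int N})) / real N))"

definition has_density :: "nat set \<Rightarrow> real \<Rightarrow> bool" where
  "has_density A \<delta> \<longleftrightarrow> (\<lambda>N. real (card (A \<inter> {..<N})) / real N) \<longlonglongrightarrow> \<delta>"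

definition arith_prog :: "nat \<Rightarrow> nat \<Rightarrow> int set" where
  "arith_prog a b = {int a * m + int b | m. True}"

definition finite_union_APs :: "int set \<Rightarrow> bool" where
  "finite_union_APs B \<longleftrightarrow> (\<exists>F. finite F \<and> (\<forall>(a, b)\<in>F. a \<noteq> 0) \<and>
      B = (\<Union>(a, b)\<in>F. arith_prog a b))"

definition rational_int :: "int set \<Rightarrow> bool" where
  "rational_int A \<longleftrightarrow> (\<forall>\<epsilon>>0. \<exists>B. finite_union_APs B \<and>
      upper_density ((A - B) \<union> (B - A)) < ereal \<epsilon>)"

definition rational_nat :: "nat set \<Rightarrow> bool" where
  "rational_nat A \<longleftrightarrow> (\<exists>C. rational_int C \<and> A = {n. int n \<in> C})"

end

theory Submission
  imports Defs
begin


lemma mem_reg: "0 < P \<Longrightarrow> y \<in> reg_interval P i \<longleftrightarrow> y div P = i"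
proof
  assume P: "0 < P" and y: "y \<in> reg_interval P i"
  then have "i * P \<le> y" "y < (i+1)*P" unfolding reg_interval_def by auto
  then show "y div P = i" by (intro div_nat_eqI) (auto simp: mult.commute)
next
  assume P: "0 < P" and y: "y div P = i"
  have "y = P * i + y mod P" using y div_mult_mod_eq[of y P] by (simp add: mult.commute)
  moreover have "y mod P < P" using P by simp
  ultimately show "y \<in> reg_interval P i" unfolding reg_interval_def
    by (auto simp: algebra_simps)
qed

lemma reg_eq: "0 < P \<Longrightarrow> reg_interval P i = {y. y div P = i}"
  using mem_reg by blast

lemma card_reg: "0 < P \<Longrightarrow> card (reg_interval P i) = P"
  unfolding reg_interval_def by (simp add: algebra_simps)

lemma div_dvd_same: "0 < (P::nat) \<Longrightarrow> P dvd Q \<Longrightarrow> y div P = x div P \<Longrightarrow> y div Q = x div Q"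
  by (metis div_mult2_eq dvd_def)

lemma div_mod_swap: "(y::nat) div P mod K = (y mod (P * K)) div P"
  by (metis (no_types, opaque_lifting) add.commute add.right_neutral
    diff_zero div_mult_self2 mod_div_trivial mod_mult2_eq modulo_nat_def
    zero_diff)

lemma pred_mod: "0 < (P::nat) \<Longrightarrow> P dvd a \<Longrightarrow> 0 < a \<Longrightarrow> (a - 1) mod P = P - 1"
proof -
  assume P: "0 < P" and d: "P dvd a" and a: "0 < a"
  obtain k where k: "a = P * k" using d by blast
  then obtain k' where k': "k = Suc k'" using a by (cases k) auto
  have "a = P + P * k'" using k k' by simp
  then have "a - 1 = (P - 1) + P * k'" using P by linarith
  then have "(a - 1) mod P = (P - 1) mod P" by simp
  then show ?thesis using P by simp
qed

lemma component_unique: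
  assumes "component M I" "component M J" "x \<in> I" "x \<in> J" shows "I = J"
proof -
  obtain a b where I: "a \<le> b" "I = {a..b}" "I \<subseteq> M" "a = 0 \<or> a - 1 \<notin> M" "b + 1 \<notin> M"
    using assms(1) unfolding component_def by blast
  obtain c d where J: "c \<le> d" "J = {c..d}" "J \<subseteq> M" "c = 0 \<or> c - 1 \<notin> M" "d + 1 \<notin> M"
    using assms(2) unfolding component_def by blast
  have "b \<le> d"
  proof (rule ccontr)
    assume "\<not> b \<le> d" then have "d + 1 \<in> I" using I J assms by auto
    then show False using I J by auto
  qed
  moreover have "d \<le> b"
  proof (rule ccontr)
    assume "\<not> d \<le> b" then have "b + 1 \<in> J" using I J assms by auto
    then show False using I J by auto
  qed
  moreover have "a \<le> c"
  proof (rule ccontr)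
    assume "\<not> a \<le> c" then have "a - 1 \<in> J" "a \<noteq> 0" using I J assms by auto
    then show False using I J by auto
  qed
  moreover have "c \<le> a"
  proof (rule ccontr)
    assume "\<not> c \<le> a" then have "c - 1 \<in> I" "c \<noteq> 0" using I J assms by auto
    then show False using I J by auto
  qed
  ultimately show ?thesis using I J by simp
qed



locale sc =
  fixes T \<kappa> :: "nat \<Rightarrow> nat"
  assumes sc: "scale T \<kappa>"
begin

lemma scf: "\<forall>n. T n > 0" "\<kappa> 0 = 3" "\<forall>n\<ge>1. (3 * \<kappa> (n - 1)) dvd \<kappa> n"
    "3 dvd T 0" "\<forall>n\<ge>1. T n = \<kappa> n * T (n - 1)"
  using sc unfolding scale_def by blast+

lemma Tpos: "0 < T n" using scf(1) by blast

lemma T_Suc: "T (Suc n) = \<kappa> (Suc n) * T n"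
  using scf(5)[rule_format, of "Suc n"] by simp

lemma k0: "\<kappa> 0 = 3" using scf(2) .

lemma k_dvd: "3 * \<kappa> n dvd \<kappa> (Suc n)"
  using scf(3)[rule_format, of "Suc n"] by simp

lemma kpos: "0 < \<kappa> n"
proof (cases n)
  case 0 then show ?thesis using k0 by simp
next
  case (Suc m) then show ?thesis using Tpos[of n] T_Suc[of m] by (metis gr0I mult_0)
qed

lemma k_ge: "3 * \<kappa> n \<le> \<kappa> (Suc n)"
  using k_dvd kpos by (simp add: dvd_imp_le)

lemma k_pow: "3 ^ Suc n \<le> \<kappa> n"
proof (induction n)
  case 0 then show ?case using k0 by simp
next
  case (Suc n) then show ?case using k_ge[of n] by simp
qed

lemma three_dvd_k: "3 dvd \<kappa> n"
proof (cases n)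
  case 0 then show ?thesis using k0 by simp
next
  case (Suc m) then show ?thesis using k_dvd[of m] dvd_mult_left by blast
qed

definition c :: "nat \<Rightarrow> nat" where "c n = \<kappa> (Suc n) div 3"

lemma kc: "\<kappa> (Suc n) = 3 * c n"
  unfolding c_def using three_dvd_k by simp

lemma c_ge: "3 \<le> c n"
proof -
  have "3 \<le> (3::nat) ^ Suc n" by simp
  then have "3 \<le> \<kappa> n" using k_pow[of n] by linarith
  then have "9 \<le> \<kappa> (Suc n)" using k_ge[of n] by linarith
  then show ?thesis using kc[of n] by simp
qed

lemma T_mono_Suc: "T n < T (Suc n)"
  using T_Suc[of n] c_ge[of n] kc[of n] Tpos[of n] by simp

lemma T_ge: "n < T n"
proof (induction n)
  case 0 then show ?case using Tpos by simp
next
  case (Suc n) then show ?case using T_mono_Suc[of n] by simp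
qed

lemma T_strict: "m < n \<Longrightarrow> T m < T n"
proof -
  have "strict_mono T" using T_mono_Suc strict_mono_Suc_iff by blast
  then show "m < n \<Longrightarrow> T m < T n" by (rule strict_monoD)
qed

lemma T_inj: "T m = T n \<Longrightarrow> m = n"
  using T_strict by (metis less_irrefl nat_neq_iff)

lemma T_dvd: "m \<le> n \<Longrightarrow> T m dvd T n"
proof (induction n)
  case 0 then show ?case by simp
next
  case (Suc n) then show ?case using T_Suc[of n] by (metis dvd_mult dvd_refl le_Suc_eq)
qed

definition dig :: "nat \<Rightarrow> nat \<Rightarrow> nat" where "dig n x = (x div T n) mod \<kappa> (Suc n)"

definition S :: "nat \<Rightarrow> nat set" where "S n = {x. dig n x = c n}"

definition R :: "nat set" where "R = {x. \<exists>n. x \<in> S n}"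

definition RN :: "nat \<Rightarrow> nat set" where "RN N = {x. \<exists>n<N. x \<in> S n}"

lemma dig_mod: "dig n x = (x mod T (Suc n)) div T n"
  unfolding dig_def T_Suc using div_mod_swap by (simp add: mult.commute)

lemma S_ge: "x \<in> S n \<Longrightarrow> c n * T n \<le> x"
proof -
  assume "x \<in> S n"
  then have "(x div T n) mod \<kappa> (Suc n) = c n" unfolding S_def dig_def by simp
  then have "c n \<le> x div T n" using mod_less_eq_dividend by metis
  then have "c n * T n \<le> (x div T n) * T n" by (rule mult_le_mono1)
  then show ?thesis using div_times_less_eq_dividend[of x "T n"] by linarith
qed

lemma S_ge_n: "x \<in> S n \<Longrightarrow> n < x"
proof -
  assume "x \<in> S n"
  have "T n \<le> c n * T n" using c_ge[of n] by simp
  then show ?thesis using S_ge[OF \<open>x \<in> S n\<close>] T_ge[of n] by linarith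
qed

lemma not0: "0 \<notin> R"
  unfolding R_def using S_ge_n by auto

end


lemma dm: "r < (K::nat) \<Longrightarrow> (r + q * K) div K = q \<and> (r + q * K) mod K = r"
  by simp

lemma digit_lemmas:
  fixes j K c :: nat
  assumes "j mod K = c" "1 \<le> c" "c + 1 < K"
  shows "(j - 1) mod K = c - 1" "(j - 1) div K = j div K"
        "(j + 1) mod K = c + 1" "(j + 1) div K = j div K"
proof -
  have j: "j = K * (j div K) + c" using assms(1) div_mult_mod_eq[of j K] by (simp add: mult.commute)
  have j1: "j - 1 = (c - 1) + (j div K) * K" using j assms(2) by (simp add: mult.commute)
  have j2: "j + 1 = (c + 1) + (j div K) * K" using j by (simp add: mult.commute)
  have a1: "c - 1 < K" "c + 1 < K" using assms by auto
  show "(j - 1) mod K = c - 1" "(j - 1) div K = j div K"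
    using dm[OF a1(1), of "j div K"] unfolding j1[symmetric] by auto
  show "(j + 1) mod K = c + 1" "(j + 1) div K = j div K"
    using dm[OF a1(2), of "j div K"] unfolding j2[symmetric] by auto
qed

lemma pred_div: "0 < (t::nat) \<Longrightarrow> 0 < K \<Longrightarrow> (K * t - 1) div t = K - 1"
proof -
  assume t: "0 < t" and K: "0 < K"
  obtain K' where K': "K = Suc K'" using K by (cases K) auto
  have e: "K * t - 1 = (t - 1) + K' * t" using K' t by (simp add: algebra_simps)
  have "t - 1 < t" using t by simp
  from dm[OF this, of K'] show ?thesis unfolding e[symmetric] K' by simp
qed

context sc begin

lemma S_div: "y div T n = x div T n \<Longrightarrow> y \<in> S n \<longleftrightarrow> x \<in> S n"
  unfolding S_def dig_def by simp

definition lev :: "nat \<Rightarrow> nat" where "lev x = Max {n. x \<in> S n}"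

lemma lev_fin: "finite {n. x \<in> S n}"
  by (rule finite_subset[of _ "{..<x}"]) (auto dest: S_ge_n)

lemma lev_S: "x \<in> R \<Longrightarrow> x \<in> S (lev x)"
  unfolding lev_def R_def using lev_fin Max_in[of "{n. x \<in> S n}"] by auto

lemma lev_max: "x \<in> S n \<Longrightarrow> n \<le> lev x"
  unfolding lev_def using lev_fin by (simp add: Max_ge)

definition blk :: "nat \<Rightarrow> nat set" where "blk x = reg_interval (T (lev x)) (x div T (lev x))"

lemma in_blk: "x \<in> blk x"
  unfolding blk_def using mem_reg[OF Tpos] by simp

lemma blk_sub: assumes "x \<in> R" shows "blk x \<subseteq> R"
proof
  fix y assume "y \<in> blk x"
  then have "y div T (lev x) = x div T (lev x)" unfolding blk_def using mem_reg[OF Tpos] by simp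
  then have "y \<in> S (lev x)" using S_div lev_S[OF assms] by blast
  then show "y \<in> R" unfolding R_def by blast
qed

lemma T_Suc': "T (Suc n) = T n * \<kappa> (Suc n)" using T_Suc by (simp add: mult.commute)

lemma blk_comp: assumes xR: "x \<in> R" shows "component R (blk x)"
proof -
  define m where "m = lev x"
  define P where "P = T m"
  define j where "j = x div P"
  define K where "K = \<kappa> (Suc m)"
  have P: "0 < P" unfolding P_def using Tpos .
  have jc: "j mod K = c m" using lev_S[OF xR] unfolding S_def dig_def j_def K_def P_def m_def by simp
  have cK: "1 \<le> c m" "c m + 1 < K" using c_ge[of m] kc[of m] unfolding K_def by auto
  have TS: "T (Suc m) = P * K" unfolding P_def K_def using T_Suc' .
  have xdivS: "x div T (Suc m) = j div K" unfolding TS j_def by (simp add: div_mult2_eq)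
  have notS_big: "y \<notin> S n" if "m < n" "y div T (Suc m) = x div T (Suc m)" for y n
  proof -
    have "T (Suc m) dvd T n" using that(1) T_dvd by simp
    then have "y div T n = x div T n" using div_dvd_same[OF Tpos _ that(2)] by blast
    moreover have "x \<notin> S n" using lev_max[of x n] that(1) unfolding m_def by auto
    ultimately show ?thesis using S_div by blast
  qed
  have B: "blk x = {j * P .. (j + 1) * P - 1}"
    unfolding blk_def reg_interval_def m_def[symmetric] P_def[symmetric] j_def by simp
  have lo: "j * P = 0 \<or> j * P - 1 \<notin> R"
  proof (cases "j * P = 0")
    case False
    then have j1: "1 \<le> j" by simp
    define y where "y = j * P - 1"
    have "y \<notin> S n" for n
    proof (cases rule: linorder_cases[of n m])
      case less
      have "T (Suc n) dvd T m" using less T_dvd by simp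
      then have "T (Suc n) dvd j * P" unfolding P_def by simp
      then have "y mod T (Suc n) = T (Suc n) - 1" unfolding y_def
        using pred_mod[OF Tpos] False by simp
      then have "dig n y = (\<kappa> (Suc n) * T n - 1) div T n" unfolding dig_mod T_Suc by simp
      also have "\<dots> = \<kappa> (Suc n) - 1" using pred_div[OF Tpos kpos] .
      finally have "dig n y \<noteq> c n" using kc[of n] c_ge[of n] by simp
      then show ?thesis unfolding S_def by simp
    next
      case equal
      have "y div P = j - 1" unfolding y_def using pred_div[OF P, of j] j1 by (simp add: mult.commute)
      then have "dig m y = c m - 1" unfolding dig_def P_def[symmetric] K_def[symmetric]
        using digit_lemmas(1)[OF jc cK] by simp
      then show ?thesis using equal cK unfolding S_def by simp
    next
      case greater
      have "y div P = j - 1" unfolding y_def using pred_div[OF P, of j] j1 by (simp add: mult.commute)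
      then have "y div T (Suc m) = x div T (Suc m)" unfolding xdivS TS
        using digit_lemmas(2)[OF jc cK] by (simp add: div_mult2_eq j_def)
      then show ?thesis using notS_big greater by blast
    qed
    then show ?thesis unfolding y_def R_def by blast
  qed simp
  have hi: "(j + 1) * P - 1 + 1 \<notin> R"
  proof -
    define y where "y = (j + 1) * P"
    have yy: "(j + 1) * P - 1 + 1 = y" unfolding y_def using P by simp
    have "y \<notin> S n" for n
    proof (cases rule: linorder_cases[of n m])
      case less
      have "T (Suc n) dvd T m" using less T_dvd by simp
      then have "T (Suc n) dvd y" unfolding P_def y_def by simp
      then have "y mod T (Suc n) = 0" by simp
      then have "dig n y = 0" unfolding dig_mod by simp
      then show ?thesis using c_ge[of n] unfolding S_def by simp
    next
      case equal
      have "y div P = j + 1" unfolding y_def using P by simp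
      then have "dig m y = c m + 1" unfolding dig_def P_def[symmetric] K_def[symmetric]
        using digit_lemmas(3)[OF jc cK] by simp
      then show ?thesis using equal unfolding S_def by simp
    next
      case greater
      have "y div P = j + 1" unfolding y_def using P by simp
      then have "y div T (Suc m) = x div T (Suc m)" unfolding xdivS TS
        using digit_lemmas(4)[OF jc cK] by (simp add: div_mult2_eq j_def)
      then show ?thesis using notS_big greater by blast
    qed
    then show ?thesis unfolding yy R_def by blast
  qed
  have "j * P \<le> (j + 1) * P - 1" using P by simp
  then show ?thesis unfolding component_def using B lo hi blk_sub[OF xR] by blast
qed

lemma comp_blk: "component R I \<Longrightarrow> x \<in> I \<Longrightarrow> I = blk x"
proof -
  assume C: "component R I" and x: "x \<in> I"
  then have "x \<in> R" unfolding component_def by blast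
  then show ?thesis using component_unique[OF C blk_comp x in_blk] by blast
qed

lemma regular_blk: "regular (T (lev x)) (blk x)"
  unfolding regular_def blk_def by blast

lemma adapted_R: "adapted T R"
  unfolding adapted_def
proof (intro conjI ballI allI impI)
  fix x assume "x \<in> R" then show "\<exists>I. x \<in> I \<and> component R I" using in_blk blk_comp by blast
next
  fix I assume C: "component R I"
  then obtain a b where "a \<le> b" "I = {a..b}" unfolding component_def by blast
  then have "a \<in> I" by simp
  then have "I = blk a" using comp_blk C by blast
  then show "\<exists>n. regular (T n) I" using regular_blk by blast
qed

end


context sc begin

lemma skel_I:
  assumes nI: "\<not> reg_interval (T (Suc p)) k \<subseteq> R"
  shows "skeleton T R p \<inter> reg_interval (T (Suc p)) k = reg_interval (T p) (k * \<kappa> (Suc p) + c p)"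
    (is "?L = ?J")
proof
  have K: "c p < \<kappa> (Suc p)" using kc[of p] c_ge[of p] by simp
  show "?J \<subseteq> ?L"
  proof
    fix y assume "y \<in> ?J"
    then have yd: "y div T p = c p + k * \<kappa> (Suc p)" using mem_reg[OF Tpos] by simp
    have "y div T (Suc p) = k" unfolding T_Suc' div_mult2_eq yd using dm[OF K] by simp
    then have yI: "y \<in> reg_interval (T (Suc p)) k" using mem_reg[OF Tpos] by simp
    have "dig p y = c p" unfolding dig_def yd using dm[OF K] by simp
    then have yS: "y \<in> S p" unfolding S_def by simp
    then have yR: "y \<in> R" unfolding R_def by blast
    have "p \<le> lev y" using lev_max[OF yS] .
    then have "y \<in> skeleton T R p" unfolding skeleton_def
      using blk_comp[OF yR] regular_blk[of y] in_blk[of y] by blast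
    then show "y \<in> ?L" using yI by blast
  qed
  show "?L \<subseteq> ?J"
  proof
    fix y assume "y \<in> ?L"
    then obtain C j where C: "component R C" "regular (T j) C" "p \<le> j" "y \<in> C"
      and yI: "y \<in> reg_interval (T (Suc p)) k"
      unfolding skeleton_def by blast
    have yR: "y \<in> R" using C unfolding component_def by blast
    have Cb: "C = blk y" using comp_blk C by blast
    obtain i where "C = reg_interval (T j) i" using C(2) unfolding regular_def by blast
    then have "card C = T j" using card_reg[OF Tpos] by simp
    moreover have "card C = T (lev y)" unfolding Cb blk_def using card_reg[OF Tpos] by simp
    ultimately have jl: "j = lev y" using T_inj by simp
    have "\<not> Suc p \<le> lev y"
    proof
      assume le: "Suc p \<le> lev y"
      have "reg_interval (T (Suc p)) k \<subseteq> R"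
      proof
        fix z assume "z \<in> reg_interval (T (Suc p)) k"
        then have "z div T (Suc p) = y div T (Suc p)" using yI mem_reg[OF Tpos] by simp
        then have "z div T (lev y) = y div T (lev y)" using div_dvd_same[OF Tpos T_dvd[OF le]] by blast
        then have "z \<in> blk y" unfolding blk_def using mem_reg[OF Tpos] by simp
        then show "z \<in> R" using blk_sub[OF yR] by blast
      qed
      then show False using nI by blast
    qed
    then have "lev y = p" using jl C(3) by simp
    then have "y \<in> S p" using lev_S[OF yR] by simp
    then have d: "y div T p mod \<kappa> (Suc p) = c p" unfolding S_def dig_def by simp
    have "y div T (Suc p) = k" using yI mem_reg[OF Tpos] by simp
    then have q: "y div T p div \<kappa> (Suc p) = k" by (simp add: T_Suc' div_mult2_eq)
    have "y div T p = k * \<kappa> (Suc p) + c p"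
      using div_mult_mod_eq[of "y div T p" "\<kappa> (Suc p)"] d q by simp
    then show "y \<in> ?J" using mem_reg[OF Tpos] by simp
  qed
qed

lemma slt: "sparsely_long_tail T \<kappa> R"
  unfolding sparsely_long_tail_def Let_def
proof (intro conjI adapted_R not0 allI impI)
  fix n k assume n: "1 \<le> n" and nI: "\<not> reg_interval (T n) k \<subseteq> R"
  obtain p where np: "n = Suc p" using n by (cases n) auto
  define t where "t = T p"
  define cc where "cc = c p"
  have t: "0 < t" unfolding t_def using Tpos .
  have cc: "3 \<le> cc" unfolding cc_def using c_ge .
  have Tn: "T n = 3 * cc * t" unfolding np t_def cc_def T_Suc kc by simp
  have kn: "\<kappa> n = 3 * cc" unfolding np cc_def kc by simp
  have eq: "skeleton T R (n - 1) \<inter> reg_interval (T n) k = reg_interval t (k * (3 * cc) + cc)"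
    using skel_I[of p k] nI unfolding np t_def cc_def kc by simp
  have crd: "card (skeleton T R (n - 1) \<inter> reg_interval (T n) k) = t"
    unfolding eq using card_reg[OF t] .
  have d3: "T n div 3 = cc * t" unfolding Tn by simp
  show "reg_interval (T n) k \<inter> skeleton T R (n - 1)
          \<subseteq> {k * T n + T n div 3..(k + 1) * T n - 1 - T n div 3}"
  proof -
    have e1: "(k * (3 * cc) + cc) * t = k * T n + T n div 3" unfolding d3 Tn by (simp add: algebra_simps)
    have e2: "(k * (3 * cc) + cc + 1) * t = 3 * (k * cc * t) + cc * t + t" by (simp add: algebra_simps)
    have e3: "(k + 1) * T n = 3 * (k * cc * t) + 3 * (cc * t)" unfolding Tn by (simp add: algebra_simps)
    have tc: "t \<le> cc * t" using cc by simp
    have le: "(k * (3 * cc) + cc + 1) * t - 1 \<le> (k + 1) * T n - 1 - T n div 3"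
      unfolding e2 e3 d3 using tc t by linarith
    have J: "reg_interval t (k * (3 * cc) + cc) = {k * T n + T n div 3 .. (k * (3 * cc) + cc + 1) * t - 1}"
      unfolding reg_interval_def e1[symmetric] by simp
    have "reg_interval (T n) k \<inter> skeleton T R (n - 1) = {k * T n + T n div 3 .. (k * (3 * cc) + cc + 1) * t - 1}"
      using eq J by (simp add: Int_commute)
    also have "\<dots> \<subseteq> {k * T n + T n div 3..(k + 1) * T n - 1 - T n div 3}"
      using le by auto
    finally show ?thesis .
  qed
  show "0 < real (card (skeleton T R (n - 1) \<inter> reg_interval (T n) k)) / real (T n)"
    unfolding crd using t Tpos[of n] by simp
  show "real (card (skeleton T R (n - 1) \<inter> reg_interval (T n) k)) / real (T n) \<le> 1 / real (\<kappa> n)"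
    unfolding crd unfolding Tn kn using t cc by (simp add: field_simps)
qed

end


lemma geo_eq: "(\<Sum>n\<in>{N..<N+d}. (1/3::real)^n) = 3/2 * ((1/3)^N - (1/3)^(N+d))"
proof (induction d)
  case 0 then show ?case by simp
next
  case (Suc d)
  have "{N..<N + Suc d} = insert (N+d) {N..<N+d}" by auto
  then have "(\<Sum>n\<in>{N..<N+Suc d}. (1/3::real)^n) = (1/3)^(N+d) + (\<Sum>n\<in>{N..<N+d}. (1/3::real)^n)"
    by simp
  also have "\<dots> = 3/2 * ((1/3)^N - (1/3)^(N+Suc d))"
  proof -
    have e: "(1/3::real)^(N+Suc d) = (1/3)^(N+d) / 3" by simp
    show ?thesis unfolding e Suc.IH by (simp add: algebra_simps)
  qed
  finally show ?case .
qed

lemma geo_le: "(\<Sum>n\<in>{N..<M}. (1/3::real)^n) \<le> 3/2 * (1/3)^N"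
proof (cases "N \<le> M")
  case True
  then have "{N..<M} = {N..<N + (M - N)}" by simp
  then show ?thesis using geo_eq[of N "M - N"] by simp
next
  case False then show ?thesis by simp
qed

lemma conv_bound:
  fixes f :: "nat \<Rightarrow> real"
  assumes "\<And>M. 0 < M \<Longrightarrow> \<bar>f M - L\<bar> \<le> C / real M"
  shows "f \<longlonglongrightarrow> L"
proof (rule tendsto_sandwich[of "\<lambda>M. L - C / real M" f sequentially "\<lambda>M. L + C / real M"])
  show "\<forall>\<^sub>F n in sequentially. L - C / real n \<le> f n"
    unfolding eventually_sequentially
  proof (intro exI[of _ 1] allI impI)
    fix n :: nat assume "1 \<le> n" then have "0 < n" by simp
    from assms[OF this] show "L - C / real n \<le> f n" unfolding abs_le_iff by linarith
  qed
  show "\<forall>\<^sub>F n in sequentially. f n \<le> L + C / real n"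
    unfolding eventually_sequentially
  proof (intro exI[of _ 1] allI impI)
    fix n :: nat assume "1 \<le> n" then have "0 < n" by simp
    from assms[OF this] show "f n \<le> L + C / real n" unfolding abs_le_iff by linarith
  qed
  show "(\<lambda>M. L - C / real M) \<longlonglongrightarrow> L"
    using tendsto_diff[OF tendsto_const lim_const_over_n[of C]] by simp
  show "(\<lambda>M. L + C / real M) \<longlonglongrightarrow> L"
    using tendsto_add[OF tendsto_const lim_const_over_n[of C]] by simp
qed

lemma periodic_count:
  assumes P: "0 < P" and per: "\<And>x. x \<in> A \<longleftrightarrow> x mod P \<in> A"
  shows "card (A \<inter> {..<q * P}) = q * card (A \<inter> {..<P})"
proof (induction q)
  case 0 then show ?case by simp
next
  case (Suc q)
  have sh: "x + q * P \<in> A \<longleftrightarrow> x \<in> A" for x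
    using per[of "x + q*P"] per[of x] by simp
  have img: "A \<inter> {q*P..<q*P+P} = (\<lambda>x. x + q * P) ` (A \<inter> {..<P})"
  proof
    show "A \<inter> {q*P..<q*P+P} \<subseteq> (\<lambda>x. x + q * P) ` (A \<inter> {..<P})"
    proof
      fix y assume y: "y \<in> A \<inter> {q*P..<q*P+P}"
      then have "y = (y - q*P) + q*P" "y - q*P < P" "y - q*P \<in> A" using sh[of "y - q*P"] by auto
      then show "y \<in> (\<lambda>x. x + q * P) ` (A \<inter> {..<P})" by blast
    qed
    show "(\<lambda>x. x + q * P) ` (A \<inter> {..<P}) \<subseteq> A \<inter> {q*P..<q*P+P}"
      using sh by auto
  qed
  have "A \<inter> {..<Suc q * P} = (A \<inter> {..<q*P}) \<union> (A \<inter> {q*P..<q*P+P})" by auto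
  then have "card (A \<inter> {..<Suc q * P}) = card (A \<inter> {..<q*P}) + card (A \<inter> {q*P..<q*P+P})"
    by (simp add: card_Un_disjoint disjoint_iff)
  also have "card (A \<inter> {q*P..<q*P+P}) = card (A \<inter> {..<P})"
    unfolding img by (rule card_image) (simp add: inj_on_def)
  finally show ?case using Suc by simp
qed

lemma periodic_density:
  assumes P: "0 < P" and per: "\<And>x. x \<in> A \<longleftrightarrow> x mod P \<in> A"
  shows "(\<lambda>M. real (card (A \<inter> {..<M})) / real M) \<longlonglongrightarrow> real (card (A \<inter> {..<P})) / real P"
proof (rule conv_bound[where C = "real (card (A \<inter> {..<P}))"])
  fix M :: nat assume M: "0 < M"
  define p where "p = card (A \<inter> {..<P})"
  define q where "q = M div P"
  have Mq: "M = q * P + M mod P" unfolding q_def by simp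
  have "M mod P < P" using P by simp
  then have qP: "q * P \<le> M" "M \<le> (q + 1) * P" using Mq by (linarith, simp)
  have c1: "q * p \<le> card (A \<inter> {..<M})"
    using periodic_count[OF P per, of q] card_mono[of "A \<inter> {..<M}" "A \<inter> {..<q*P}"] qP
    unfolding p_def by force
  have c2: "card (A \<inter> {..<M}) \<le> (q + 1) * p"
    using periodic_count[OF P per, of "q+1"] card_mono[of "A \<inter> {..<(q+1)*P}" "A \<inter> {..<M}"] qP
    unfolding p_def by force
  have "real (q * P) \<le> real M" "real M \<le> real ((q + 1) * P)"
    using qP by (simp only: of_nat_le_iff)+
  then have r1: "real q * real P \<le> real M" "real M \<le> (real q + 1) * real P" by (simp_all add: algebra_simps)
  have "real (q * p) \<le> real (card (A \<inter> {..<M}))" "real (card (A \<inter> {..<M})) \<le> real ((q + 1) * p)"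
    using c1 c2 by (simp only: of_nat_le_iff)+
  then have r2: "real q * real p \<le> real (card (A \<inter> {..<M}))" "real (card (A \<inter> {..<M})) \<le> (real q + 1) * real p"
    by (simp_all add: algebra_simps)
  have Mr: "0 < real M" using M by simp
  have Pr: "0 < real P" using P by simp
  have "\<bar>real (card (A \<inter> {..<M})) / real M - real p / real P\<bar> \<le> real p / real M"
  proof -
    have u: "real (card (A \<inter> {..<M})) * real P \<le> real p * real P + real p * real M"
    proof -
      have "real (card (A \<inter> {..<M})) * real P \<le> (real q + 1) * real p * real P"
        using r2(2) Pr by (simp add: mult_right_mono)
      also have "\<dots> = real p * (real q * real P) + real p * real P" by (simp add: algebra_simps)
      also have "\<dots> \<le> real p * real M + real p * real P" using r1(1) by (simp add: mult_left_mono)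
      finally show ?thesis by simp
    qed
    have l: "real p * real M \<le> real (card (A \<inter> {..<M})) * real P + real p * real P"
    proof -
      have "real p * real M \<le> real p * ((real q + 1) * real P)" using r1(2) by (simp add: mult_left_mono)
      also have "\<dots> = real q * real p * real P + real p * real P" by (simp add: algebra_simps)
      also have "\<dots> \<le> real (card (A \<inter> {..<M})) * real P + real p * real P"
        using r2(1) Pr by (simp add: mult_right_mono)
      finally show ?thesis .
    qed
    show ?thesis using u l Mr Pr by (simp add: abs_le_iff field_simps)
  qed
  then show "\<bar>real (card (A \<inter> {..<M})) / real M - real (card (A \<inter> {..<P})) / real P\<bar>
       \<le> real (card (A \<inter> {..<P})) / real M" unfolding p_def .
qed



context sc begin

lemma S_cover: "x \<in> S n \<Longrightarrow> x div T n = (x div T (Suc n)) * \<kappa> (Suc n) + c n"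
proof -
  assume "x \<in> S n"
  then have d: "x div T n mod \<kappa> (Suc n) = c n" unfolding S_def dig_def by simp
  have "x div T (Suc n) = x div T n div \<kappa> (Suc n)" by (simp add: T_Suc' div_mult2_eq)
  then show ?thesis using div_mult_mod_eq[of "x div T n" "\<kappa> (Suc n)"] d by simp
qed

lemma S_cnt: "card (S n \<inter> {..<M}) \<le> (M div T (Suc n) + 1) * T n"
proof -
  let ?U = "\<Union>q\<in>{..M div T (Suc n)}. reg_interval (T n) (q * \<kappa> (Suc n) + c n)"
  have sub: "S n \<inter> {..<M} \<subseteq> ?U"
  proof
    fix x assume x: "x \<in> S n \<inter> {..<M}"
    then have "x div T (Suc n) \<le> M div T (Suc n)" by (simp add: div_le_mono)
    moreover have "x \<in> reg_interval (T n) (x div T (Suc n) * \<kappa> (Suc n) + c n)"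
      using S_cover[of x n] x mem_reg[OF Tpos] by simp
    ultimately show "x \<in> ?U" by blast
  qed
  have fin: "finite ?U" unfolding reg_interval_def by simp
  have "card (S n \<inter> {..<M}) \<le> card ?U" using card_mono[OF fin sub] .
  also have "\<dots> \<le> (\<Sum>q\<in>{..M div T (Suc n)}. card (reg_interval (T n) (q * \<kappa> (Suc n) + c n)))"
    by (rule card_UN_le) simp
  also have "\<dots> = (M div T (Suc n) + 1) * T n" using card_reg[OF Tpos] by simp
  finally show ?thesis .
qed

lemma S_cnt_real: "real (card (S n \<inter> {..<M})) \<le> 4 * real M * (1/3)^(n+2)"
proof (cases "S n \<inter> {..<M} = {}")
  case True then show ?thesis by simp
next
  case False
  then obtain x where x: "x \<in> S n" "x < M" by blast
  define T' where "T' = T (Suc n)"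
  have T'pos: "0 < real T'" unfolding T'_def using Tpos by simp
  have TT: "T' = \<kappa> (Suc n) * T n" unfolding T'_def T_Suc ..
  have "3 * (c n * T n) \<le> 3 * x" using S_ge[OF x(1)] by simp
  then have "T' < 3 * M" unfolding TT kc using x(2) by simp
  then have lt: "real T' < 3 * real M" by linarith
  have dv: "real (M div T') * real T' \<le> real M"
  proof -
    have "real ((M div T') * T') \<le> real M" by (simp only: of_nat_le_iff div_times_less_eq_dividend)
    then show ?thesis by simp
  qed
  have dv2: "real (M div T') \<le> real M / real T'" using dv T'pos by (simp add: field_simps)
  have one: "1 \<le> 3 * real M / real T'" using lt T'pos by (simp add: field_simps)
  have "real (card (S n \<inter> {..<M})) \<le> real ((M div T' + 1) * T n)"
    using S_cnt[of n M] unfolding T'_def by (simp only: of_nat_le_iff)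
  also have "\<dots> = (real (M div T') + 1) * real (T n)" by (simp add: algebra_simps)
  also have "\<dots> \<le> (real M / real T' + 3 * real M / real T') * real (T n)"
    using dv2 one by (intro mult_right_mono) auto
  also have "\<dots> = 4 * real M / real (\<kappa> (Suc n))"
    unfolding TT using Tpos[of n] kpos[of "Suc n"] by (simp add: field_simps)
  also have "\<dots> \<le> 4 * real M / 3 ^ (n + 2)"
  proof -
    have "(3::nat) ^ (n + 2) \<le> \<kappa> (Suc n)" using k_pow[of "Suc n"] by simp
    then have "real ((3::nat) ^ (n + 2)) \<le> real (\<kappa> (Suc n))" by (simp only: of_nat_le_iff)
    then have "(3::real) ^ (n + 2) \<le> real (\<kappa> (Suc n))" by simp
    then show ?thesis using kpos[of "Suc n"] by (intro divide_left_mono) auto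
  qed
  also have "\<dots> = 4 * real M * (1/3)^(n+2)" by (simp add: field_simps)
  finally show ?thesis .
qed

lemma tail: "real (card ((R - RN N) \<inter> {..<M})) \<le> 2/3 * (1/3)^N * real M"
proof -
  let ?U = "\<Union>n\<in>{N..<M}. S n \<inter> {..<M}"
  have sub: "(R - RN N) \<inter> {..<M} \<subseteq> ?U"
  proof
    fix x assume x: "x \<in> (R - RN N) \<inter> {..<M}"
    then obtain n where n: "x \<in> S n" unfolding R_def by blast
    have "N \<le> n"
    proof (rule ccontr)
      assume "\<not> N \<le> n"
      then have "n < N" by simp
      then have "x \<in> RN N" using n unfolding RN_def by blast
      then show False using x by auto
    qed
    moreover have "n < M" using S_ge_n[OF n] x by simp
    ultimately show "x \<in> ?U" using n x by auto
  qed
  have "card ((R - RN N) \<inter> {..<M}) \<le> card ?U" by (rule card_mono[OF _ sub]) simp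
  also have "\<dots> \<le> (\<Sum>n\<in>{N..<M}. card (S n \<inter> {..<M}))" by (rule card_UN_le) simp
  finally have "real (card ((R - RN N) \<inter> {..<M})) \<le> real (\<Sum>n\<in>{N..<M}. card (S n \<inter> {..<M}))"
    by (simp only: of_nat_le_iff)
  also have "\<dots> = (\<Sum>n\<in>{N..<M}. real (card (S n \<inter> {..<M})))" by simp
  also have "\<dots> \<le> (\<Sum>n\<in>{N..<M}. 4 * real M * (1/3)^(n+2))" by (intro sum_mono S_cnt_real)
  also have "\<dots> = 4 * real M / 9 * (\<Sum>n\<in>{N..<M}. (1/3::real)^n)"
    by (simp add: sum_distrib_left power_add)
  also have "\<dots> \<le> 4 * real M / 9 * (3/2 * (1/3)^N)" by (intro mult_left_mono geo_le) auto
  also have "\<dots> = 2/3 * (1/3)^N * real M" by simp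
  finally show ?thesis .
qed

lemma RN_sub: "RN N \<subseteq> R" unfolding RN_def R_def by blast

lemma RN0: "RN 0 = {}" unfolding RN_def by simp

lemma RN_per: "x \<in> RN N \<longleftrightarrow> x mod T N \<in> RN N"
proof -
  have "dig n x = dig n (x mod T N)" if "n < N" for n
  proof -
    have "T (Suc n) dvd T N" using that T_dvd by simp
    then show ?thesis unfolding dig_mod by (simp add: mod_mod_cancel)
  qed
  then show ?thesis unfolding RN_def S_def by auto
qed

end


context sc begin

definition e :: "nat \<Rightarrow> real" where "e N = 2/3 * (1/3)^N"

lemma e_small: "0 < \<epsilon> \<Longrightarrow> \<exists>N. e N < \<epsilon>"
proof -
  assume "0 < \<epsilon>"
  then obtain N where "(1/3::real)^N < \<epsilon>" using real_arch_pow_inv[of \<epsilon> "1/3"] by auto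
  moreover have "0 \<le> (1/3::real)^N" by simp
  ultimately have "e N < \<epsilon>" unfolding e_def by linarith
  then show ?thesis by blast
qed

lemma e_nonneg: "0 \<le> e N" unfolding e_def by simp

lemma cnt_split: "card (R \<inter> {..<M}) \<le> card (RN N \<inter> {..<M}) + card ((R - RN N) \<inter> {..<M})"
proof -
  have "R \<inter> {..<M} = (RN N \<inter> {..<M}) \<union> ((R - RN N) \<inter> {..<M})" using RN_sub by auto
  then show ?thesis by (metis card_Un_le)
qed

lemma ab:
  "real (card (RN N \<inter> {..<M})) / real M \<le> real (card (R \<inter> {..<M})) / real M"
  "real (card (R \<inter> {..<M})) / real M \<le> real (card (RN N \<inter> {..<M})) / real M + e N"
proof -
  have "card (RN N \<inter> {..<M}) \<le> card (R \<inter> {..<M})" using RN_sub by (intro card_mono) auto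
  then show "real (card (RN N \<inter> {..<M})) / real M \<le> real (card (R \<inter> {..<M})) / real M"
    by (intro divide_right_mono) auto
  show "real (card (R \<inter> {..<M})) / real M \<le> real (card (RN N \<inter> {..<M})) / real M + e N"
  proof (cases "M = 0")
    case True then show ?thesis using e_nonneg by simp
  next
    case False
    then have Mp: "0 < real M" by simp
    have "real (card (R \<inter> {..<M})) \<le> real (card (RN N \<inter> {..<M})) + real (card ((R - RN N) \<inter> {..<M}))"
      using cnt_split[of M N] by linarith
    also have "\<dots> \<le> real (card (RN N \<inter> {..<M})) + e N * real M" using tail[of N M] unfolding e_def by simp
    finally show ?thesis using Mp by (simp add: field_simps)
  qed
qed

lemma bconv: "(\<lambda>M. real (card (RN N \<inter> {..<M})) / real M) \<longlonglongrightarrow> real (card (RN N \<inter> {..<T N})) / real (T N)"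
  by (rule periodic_density[OF Tpos RN_per])

lemma aconv: "\<exists>\<delta>. (\<lambda>M. real (card (R \<inter> {..<M})) / real M) \<longlonglongrightarrow> \<delta>"
proof -
  let ?a = "\<lambda>M. real (card (R \<inter> {..<M})) / real M"
  have "Cauchy ?a"
  proof (rule CauchyI)
    fix \<epsilon> :: real assume ep: "0 < \<epsilon>"
    then obtain N where N: "e N < \<epsilon> / 3" using e_small[of "\<epsilon>/3"] by auto
    let ?b = "\<lambda>M. real (card (RN N \<inter> {..<M})) / real M"
    have "Cauchy ?b" using bconv by (rule LIMSEQ_imp_Cauchy)
    then obtain M0 where M0: "\<forall>m\<ge>M0. \<forall>n\<ge>M0. norm (?b m - ?b n) < \<epsilon> / 3"
      using CauchyD[of ?b "\<epsilon>/3"] ep by auto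
    have "norm (?a m - ?a n) < \<epsilon>" if "m \<ge> M0" "n \<ge> M0" for m n
    proof -
      have "\<bar>?b m - ?b n\<bar> < \<epsilon> / 3" using M0 that by auto
      then have h: "?b m - ?b n < \<epsilon> / 3" "- (?b m - ?b n) < \<epsilon> / 3" unfolding abs_less_iff by auto
      show ?thesis unfolding real_norm_def abs_less_iff
        using h ab[where N=N and M=m] ab[where N=N and M=n] N by linarith
    qed
    then show "\<exists>M. \<forall>m\<ge>M. \<forall>n\<ge>M. norm (?a m - ?a n) < \<epsilon>" by blast
  qed
  then show ?thesis using Cauchy_convergent_iff convergent_def by blast
qed

lemma density: "\<exists>\<delta>. has_density R \<delta> \<and> 0 < \<delta> \<and> \<delta> < 1"
proof -
  obtain \<delta> where d: "(\<lambda>M. real (card (R \<inter> {..<M})) / real M) \<longlonglongrightarrow> \<delta>" using aconv by blast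
  have "real (card (RN 1 \<inter> {..<T 1})) / real (T 1) \<le> \<delta>"
    using LIMSEQ_le[OF bconv[of 1] d] ab(1)[where N=1] by blast
  moreover have "0 < real (card (RN 1 \<inter> {..<T 1})) / real (T 1)"
  proof -
    have k: "c 0 < \<kappa> 1" using kc[of 0] c_ge[of 0] by simp
    have "dig 0 (c 0 * T 0) = c 0" unfolding dig_def using Tpos[of 0] k by simp
    then have "c 0 * T 0 \<in> RN 1" unfolding RN_def S_def by simp
    moreover have "c 0 * T 0 < T 1" using T_Suc[of 0] k Tpos[of 0] by simp
    ultimately have "RN 1 \<inter> {..<T 1} \<noteq> {}" by blast
    then have "0 < card (RN 1 \<inter> {..<T 1})" by (simp add: card_gt_0_iff)
    then show ?thesis using Tpos[of 1] by simp
  qed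
  moreover have "\<delta> \<le> 2/3"
  proof (rule LIMSEQ_le_const2[OF d])
    have "\<forall>n. real (card (R \<inter> {..<n})) / real n \<le> 2/3"
      using ab(2)[where N=0] unfolding RN0 e_def by simp
    then show "\<exists>N. \<forall>n\<ge>N. real (card (R \<inter> {..<n})) / real n \<le> 2/3" by blast
  qed
  ultimately show ?thesis unfolding has_density_def using d by auto
qed

lemma B_mem:
  fixes N :: nat and x :: nat
  defines "B \<equiv> \<Union>(a, b)\<in>(\<lambda>r. (T N, r)) ` (RN N \<inter> {..<T N}). arith_prog a b"
  shows "int x \<in> B \<longleftrightarrow> x \<in> RN N"
proof
  assume "int x \<in> B"
  then obtain r m where r: "r \<in> RN N" "r < T N" "int x = int (T N) * m + int r"
    unfolding B_def arith_prog_def by auto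
  have "int (x mod T N) = int x mod int (T N)" by (simp add: zmod_int)
  also have "\<dots> = int r" using r(2,3) by simp
  finally have "x mod T N = r" by simp
  then show "x \<in> RN N" using RN_per[of x N] r(1) by simp
next
  assume x: "x \<in> RN N"
  have "x mod T N \<in> RN N \<inter> {..<T N}" using x RN_per Tpos[of N] by simp
  moreover have "int x = int (T N) * int (x div T N) + int (x mod T N)"
    by (metis div_mult_mod_eq of_nat_add of_nat_mult mult.commute)
  ultimately show "int x \<in> B" unfolding B_def arith_prog_def by blast
qed

lemma rational: "rational_nat R"
  unfolding rational_nat_def
proof (intro exI conjI)
  show "R = {n. int n \<in> int ` R}" by auto
  show "rational_int (int ` R)" unfolding rational_int_def
  proof (intro allI impI)
    fix \<epsilon> :: real assume "0 < \<epsilon>"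
    then obtain N where N: "e N < \<epsilon>" using e_small by blast
    define B where "B = (\<Union>(a, b)\<in>(\<lambda>r. (T N, r)) ` (RN N \<inter> {..<T N}). arith_prog a b)"
    have Bm: "int x \<in> B \<longleftrightarrow> x \<in> RN N" for x unfolding B_def by (rule B_mem)
    have fu: "finite_union_APs B" unfolding finite_union_APs_def B_def
      using Tpos[of N] by (intro exI[of _ "(\<lambda>r. (T N, r)) ` (RN N \<inter> {..<T N})"]) auto
    let ?D = "(int ` R - B) \<union> (B - int ` R)"
    have sub: "?D \<inter> {0..<int M} \<subseteq> int ` ((R - RN N) \<inter> {..<M})" for M
    proof
      fix z assume z: "z \<in> ?D \<inter> {0..<int M}"
      then obtain x where x: "z = int x" "x < M" by (metis IntD2 atLeastLessThan_iff nonneg_int_cases of_nat_less_iff)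
      have "x \<in> R - RN N" using z RN_sub Bm[of x] unfolding x(1) by auto
      then show "z \<in> int ` ((R - RN N) \<inter> {..<M})" using x by auto
    qed
    have le: "ereal (real (card (?D \<inter> {0..<int M})) / real M) \<le> ereal (e N)" for M
    proof -
      have "card (?D \<inter> {0..<int M}) \<le> card (int ` ((R - RN N) \<inter> {..<M}))"
        by (rule card_mono[OF _ sub]) simp
      also have "\<dots> \<le> card ((R - RN N) \<inter> {..<M})" by (rule card_image_le) simp
      finally have "real (card (?D \<inter> {0..<int M})) \<le> e N * real M"
        using tail[of N M] unfolding e_def by linarith
      then have "real (card (?D \<inter> {0..<int M})) / real M \<le> e N"
        using e_nonneg[of N] by (cases "M = 0") (auto simp: field_simps)
      then show ?thesis by simp
    qed
    have "upper_density ?D \<le> ereal (e N)" unfolding upper_density_def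
      by (rule Limsup_bounded) (use le in auto)
    also have "\<dots> < ereal \<epsilon>" using N by simp
    finally show "\<exists>B. finite_union_APs B \<and> upper_density ((int ` R - B) \<union> (B - int ` R)) < ereal \<epsilon>"
      using fu by blast
  qed
qed

end

theorem proposition6:
  fixes T \<kappa> :: "nat \<Rightarrow> nat"
  assumes "scale T \<kappa>"
  shows "\<exists>R. sparsely_long_tail T \<kappa> R \<and> rational_nat R \<and>
           (\<exists>\<delta>. has_density R \<delta> \<and> 0 < \<delta> \<and> \<delta> < 1)"
proof -
  interpret sc T \<kappa> by (rule sc.intro) (rule assms)
  show ?thesis using slt rational density by blast
qed

end
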